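(* Let $t\in[0,1]$, assume $\rho_\theta(\cdot,t)$ dominates $\rho_\ast(\cdot,t)$, and let $F:\mathbb{R}^D\to\mathbb{R}$ be integrable with respect to $\rho_\ast(\cdot,t)$. Let $x_0^{(1)},x_0^{(2)},\dots$ be i.i.d. samples from $\mu$ and $$F_N(t):=\sum_{i=1}^N w_i(t)\,F\big(x(t;x_0^{(i)})\big),\qquad w_i(t):=\frac{\tilde w(t;x_0^{(i)})}{\sum_{j=1}^N\tilde w(t;x_0^{(j)})}.$$ Then $F_N(t)\to\mathbb{E}_{x'\sim\rho_\ast(\cdot,t)}[F(x')]$ in probability as $N\to\infty$. In particular (Corollary 1), if $\partial_t\log\tilde\rho_\ast(\cdot,t)$ is integrable with respect to $\rho_\ast(\cdot,t)$, then $\sum_{i=1}^N w_i(t)\,\partial_t\log\tilde\rho_\ast(x(t;x_0^{(i)}),t)\to\mathbb{E}_{x'\sim\rho_\ast(\cdot,t)}[\partial_t\log\tilde\rho_\ast(x',t)]$ in probability.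
   Context: Let $D\ge1$. Let $\tilde\rho_\ast:\mathbb{R}^D\times[0,1]\to(0,\infty)$ be a smooth unnormalized time-dependent density with $\mathcal{Z}(t):=\int\tilde\rho_\ast(x,t)\,dx<\infty$, $\rho_\ast(x,t):=\tilde\rho_\ast(x,t)/\mathcal{Z}(t)$, and with $\tilde\rho_\ast(\cdot,0)=\mu$ a normalized probability density. Score: $S_\ast(x,t):=\nabla_x\log\tilde\rho_\ast(x,t)$. Define $g(x,t):=\partial_t\log\tilde\rho_\ast(x,t)-\mathbb{E}_{x'\sim\rho_\ast(\cdot,t)}[\partial_t\log\tilde\rho_\ast(x',t)]$. Let $v_\theta:\mathbb{R}^D\times[0,1]\to\mathbb{R}^D$ be a smooth velocity field, globally Lipschitz in $x$. For $x_0\in\mathbb{R}^D$, let $x(t;x_0)$ denote the solution of $\dot x(t)=v_\theta(x(t),t)$, $x(0)=x_0$. Let $\rho_\theta(\cdot,t)$ be the solution of $\partial_t\rho_\theta=-\nabla_x\cdot(v_\theta\rho_\theta)$, $\rho_\theta(\cdot,0)=\mu$ (the density of $x(t;x_0)$ for $x_0\sim\mu$). Define $\varepsilon(x,t):=\nabla_x\cdot v_\theta(x,t)+S_\ast(x,t)\cdot v_\theta(x,t)+g(x,t)$ and $\tilde w(t;x_0):=\exp\!\big(\int_0^t\varepsilon(x(s;x_0),s)\,ds\big)$. "$\rho_\theta(\cdot,t)$ dominates $\rho_\ast(\cdot,t)$" means $\rho_\theta(x,t)>0$ whenever $\rho_\ast(x,t)>0$. *)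

theory Defs
  imports "HOL-Probability.Probability"
begin

text \<open>Iterated partial derivatives along basis directions, taken within the set S
  (S = R^D x [0,1] has nonempty interior and is convex, so these are unique).\<close>
fun iter_partial :: "'a::euclidean_space set \<Rightarrow> 'a list \<Rightarrow> ('a \<Rightarrow> 'b::real_normed_vector) \<Rightarrow> 'a \<Rightarrow> 'b" where
  "iter_partial S [] f = f"
| "iter_partial S (u # us) f = (\<lambda>x. frechet_derivative (iter_partial S us f) (at x within S) u)"

definition smooth_on :: "'a::euclidean_space set \<Rightarrow> ('a \<Rightarrow> 'b::real_normed_vector) \<Rightarrow> bool" where
  "smooth_on S f \<longleftrightarrow>
     (\<forall>us. set us \<subseteq> Basis \<longrightarrow> (\<forall>x\<in>S. iter_partial S us f differentiable (at x within S)))"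

definition grad :: "('a::euclidean_space \<Rightarrow> real) \<Rightarrow> 'a \<Rightarrow> 'a" where
  "grad f x = (\<Sum>b\<in>Basis. frechet_derivative f (at x) b *\<^sub>R b)"

definition divergence :: "('a::euclidean_space \<Rightarrow> 'a) \<Rightarrow> 'a \<Rightarrow> real" where
  "divergence F x = (\<Sum>b\<in>Basis. frechet_derivative F (at x) b \<bullet> b)"

definition partial_t :: "('a \<Rightarrow> real \<Rightarrow> real) \<Rightarrow> 'a \<Rightarrow> real \<Rightarrow> real" where
  "partial_t f x t = vector_derivative (\<lambda>s. f x s) (at t within {0..1})"

definition Zc :: "('a::euclidean_space \<Rightarrow> real \<Rightarrow> real) \<Rightarrow> real \<Rightarrow> real" where
  "Zc rho t = (\<integral>x. rho x t \<partial>lborel)"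

definition rho_star :: "('a::euclidean_space \<Rightarrow> real \<Rightarrow> real) \<Rightarrow> 'a \<Rightarrow> real \<Rightarrow> real" where
  "rho_star rho x t = rho x t / Zc rho t"

definition star_measure :: "('a::euclidean_space \<Rightarrow> real \<Rightarrow> real) \<Rightarrow> real \<Rightarrow> 'a measure" where
  "star_measure rho t = density lborel (\<lambda>x. ennreal (rho_star rho x t))"

definition score :: "('a::euclidean_space \<Rightarrow> real \<Rightarrow> real) \<Rightarrow> 'a \<Rightarrow> real \<Rightarrow> 'a" where
  "score rho x t = grad (\<lambda>y. ln (rho y t)) x"

definition gfun :: "('a::euclidean_space \<Rightarrow> real \<Rightarrow> real) \<Rightarrow> 'a \<Rightarrow> real \<Rightarrow> real" where
  "gfun rho x t = partial_t (\<lambda>y s. ln (rho y s)) x t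
      - (\<integral>y. partial_t (\<lambda>y s. ln (rho y s)) y t \<partial>star_measure rho t)"

definition epsf :: "('a::euclidean_space \<Rightarrow> real \<Rightarrow> real) \<Rightarrow> ('a \<Rightarrow> real \<Rightarrow> 'a) \<Rightarrow> 'a \<Rightarrow> real \<Rightarrow> real" where
  "epsf rho v x t = divergence (\<lambda>y. v y t) x + score rho x t \<bullet> v x t + gfun rho x t"

text \<open>Unnormalised weight w_tilde(t;x0) = exp(int_0^t epsilon(x(s;x0),s) ds),
  where X x0 s is the flow x(s;x0).\<close>
definition wtilde :: "('a::euclidean_space \<Rightarrow> real \<Rightarrow> real) \<Rightarrow> ('a \<Rightarrow> real \<Rightarrow> 'a)
      \<Rightarrow> ('a \<Rightarrow> real \<Rightarrow> 'a) \<Rightarrow> real \<Rightarrow> 'a \<Rightarrow> real" where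
  "wtilde rho v X t x0 = exp (integral {0..t} (\<lambda>s. epsf rho v (X x0 s) s))"

definition estimator :: "('a::euclidean_space \<Rightarrow> real \<Rightarrow> real) \<Rightarrow> ('a \<Rightarrow> real \<Rightarrow> 'a)
      \<Rightarrow> ('a \<Rightarrow> real \<Rightarrow> 'a) \<Rightarrow> real \<Rightarrow> ('a \<Rightarrow> real) \<Rightarrow> (nat \<Rightarrow> 'a) \<Rightarrow> nat \<Rightarrow> real" where
  "estimator rho v X t F xs N =
     (\<Sum>i<N. (wtilde rho v X t (xs i) / (\<Sum>j<N. wtilde rho v X t (xs j))) * F (X (xs i) t))"

definition conv_in_prob :: "'w measure \<Rightarrow> (nat \<Rightarrow> 'w \<Rightarrow> real) \<Rightarrow> real \<Rightarrow> bool" where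
  "conv_in_prob M Y c \<longleftrightarrow>
     (\<forall>n. Y n \<in> borel_measurable M) \<and>
     (\<forall>e>0. (\<lambda>n. measure M {\<omega>\<in>space M. \<bar>Y n \<omega> - c\<bar> > e}) \<longlonglongrightarrow> 0)"

end

theory Submission
  imports Defs
begin


definition trunc :: "real \<Rightarrow> real \<Rightarrow> real" where
  "trunc K x = max (-K) (min K x)"

lemma trunc_cont[measurable]: "trunc K \<in> borel_measurable borel"
  unfolding trunc_def by measurable

lemma abs_trunc_rem: "\<bar>x - trunc K x\<bar> \<le> \<bar>x\<bar>" if "K \<ge> 0" for x K
  using that unfolding trunc_def by auto

lemma (in prob_space) trunc_rem_small:
  fixes Y :: "'a \<Rightarrow> real"
  assumes int: "integrable M Y" and eta: "eta > 0"
  shows "\<exists>K\<ge>1. (\<integral>x. \<bar>Y x - trunc K (Y x)\<bar> \<partial>M) < eta"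
proof -
  have meas[measurable]: "Y \<in> borel_measurable M" using int by auto
  have "(\<lambda>n. \<integral>x. \<bar>Y x - trunc (real n) (Y x)\<bar> \<partial>M) \<longlonglongrightarrow> (\<integral>x. 0 \<partial>M)"
  proof (rule integral_dominated_convergence[where w="\<lambda>x. \<bar>Y x\<bar>"])
    show "integrable M (\<lambda>x. \<bar>Y x\<bar>)" using int by auto
    show "AE x in M. (\<lambda>n. \<bar>Y x - trunc (real n) (Y x)\<bar>) \<longlonglongrightarrow> 0"
    proof (rule AE_I2)
      fix x
      obtain N :: nat where N: "\<bar>Y x\<bar> \<le> real N" using real_arch_simple by blast
      have "eventually (\<lambda>n. \<bar>Y x - trunc (real n) (Y x)\<bar> = 0) sequentially"
        using eventually_ge_at_top[of N]
        by eventually_elim (use N in \<open>auto simp: trunc_def\<close>)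
      then show "(\<lambda>n. \<bar>Y x - trunc (real n) (Y x)\<bar>) \<longlonglongrightarrow> 0"
        by (rule tendsto_eventually)
    qed
    show "\<And>n. AE x in M. norm \<bar>Y x - trunc (real n) (Y x)\<bar> \<le> \<bar>Y x\<bar>"
      by (auto intro!: abs_trunc_rem)
  qed measurable
  then have "eventually (\<lambda>n. (\<integral>x. \<bar>Y x - trunc (real n) (Y x)\<bar> \<partial>M) < eta) sequentially"
    using eta by (auto simp: order_tendsto_iff)
  then have "eventually (\<lambda>n. n \<ge> 1 \<and> (\<integral>x. \<bar>Y x - trunc (real n) (Y x)\<bar> \<partial>M) < eta) sequentially"
    using eventually_ge_at_top[of 1] by eventually_elim auto
  then obtain n where "n \<ge> 1" "(\<integral>x. \<bar>Y x - trunc (real n) (Y x)\<bar> \<partial>M) < eta"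
    using eventually_sequentially by auto
  then show ?thesis by (intro exI[of _ "real n"]) auto
qed

lemma (in prob_space) transfer_ident:
  fixes Z :: "nat \<Rightarrow> 'a \<Rightarrow> real" and g :: "real \<Rightarrow> real"
  assumes measZ[measurable]: "\<And>i. Z i \<in> borel_measurable M"
    and ident: "\<And>i. distr M borel (Z i) = distr M borel (Z 0)"
    and g[measurable]: "g \<in> borel_measurable borel" and gi: "integrable M (\<lambda>x. g (Z 0 x))"
  shows "integrable M (\<lambda>x. g (Z i x)) \<and> (\<integral>x. g (Z i x) \<partial>M) = (\<integral>x. g (Z 0 x) \<partial>M)"
proof -
  have "integrable (distr M borel (Z 0)) g"
    using integrable_distr_eq[OF measZ[of 0] g] gi by simp
  then have "integrable (distr M borel (Z i)) g" by (simp only: ident[of i])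
  then have i1: "integrable M (\<lambda>x. g (Z i x))"
    using integrable_distr_eq[OF measZ[of i] g] by simp
  have "(\<integral>x. g (Z i x) \<partial>M) = (\<integral>x. g x \<partial>distr M borel (Z i))"
    using integral_distr[OF measZ[of i] g] by simp
  also have "\<dots> = (\<integral>x. g x \<partial>distr M borel (Z 0))" by (simp only: ident[of i])
  also have "\<dots> = (\<integral>x. g (Z 0 x) \<partial>M)"
    using integral_distr[OF measZ[of 0] g] by simp
  finally show ?thesis using i1 by simp
qed
lemma (in prob_space) wlln:
  fixes Z :: "nat \<Rightarrow> 'a \<Rightarrow> real"
  assumes indep: "indep_vars (\<lambda>_. borel) Z UNIV"
    and ident: "\<And>i. distr M borel (Z i) = distr M borel (Z 0)"
    and int: "integrable M (Z 0)"
    and e: "e > 0"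
  shows "(\<lambda>n. prob {\<omega>\<in>space M. \<bar>(\<Sum>i<n. Z i \<omega>) / real n - expectation (Z 0)\<bar> > e}) \<longlonglongrightarrow> 0"
proof (rule LIMSEQ_I)
  fix eta :: real assume eta: "eta > 0"
  have measZ[measurable]: "\<And>i. Z i \<in> borel_measurable M"
    using indep unfolding indep_vars_def by auto
  have transfer: "integrable M (\<lambda>x. g (Z i x)) \<and> (\<integral>x. g (Z i x) \<partial>M) = (\<integral>x. g (Z 0 x) \<partial>M)"
    if g: "g \<in> borel_measurable borel" and gi: "integrable M (\<lambda>x. g (Z 0 x))" for g :: "real \<Rightarrow> real" and i
    using transfer_ident[where Z=Z, OF measZ ident g gi] .
  define c where "c = min (e/4) (eta*e/8)"
  have c: "c > 0" using e eta by (simp add: c_def)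
  obtain K where K: "K \<ge> 1" "(\<integral>x. \<bar>Z 0 x - trunc K (Z 0 x)\<bar> \<partial>M) < c"
    using trunc_rem_small[OF int c] by auto
  define R where "R i x = Z i x - trunc K (Z i x)" for i x
  define T where "T i x = trunc K (Z i x)" for i x
  have [measurable]: "R i \<in> borel_measurable M" "T i \<in> borel_measurable M" for i
    unfolding R_def T_def by measurable
  have intabsR0: "integrable M (\<lambda>x. \<bar>Z 0 x - trunc K (Z 0 x)\<bar>)"
    by (rule Bochner_Integration.integrable_bound[OF integrable_abs[OF int]])
       (use K in \<open>auto intro!: abs_trunc_rem\<close>)
  have absR: "integrable M (\<lambda>x. \<bar>R i x\<bar>) \<and> (\<integral>x. \<bar>R i x\<bar> \<partial>M) = (\<integral>x. \<bar>R 0 x\<bar> \<partial>M)" for i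
    unfolding R_def using transfer[of "\<lambda>y. \<bar>y - trunc K y\<bar>" i] intabsR0 by auto
  have intT0: "integrable M (T 0)"
    unfolding T_def
    by (rule Bochner_Integration.integrable_bound[where f="\<lambda>_. K"]) (auto simp: trunc_def)
  have intR0: "integrable M (R 0)"
    unfolding R_def using int intT0[unfolded T_def] by auto
  have ER: "\<bar>expectation (R 0)\<bar> < e/4"
  proof -
    have "\<bar>expectation (R 0)\<bar> \<le> expectation (\<lambda>x. \<bar>R 0 x\<bar>)"
      by (rule integral_abs_bound)
    also have "\<dots> < c" using K(2) by (simp add: R_def)
    finally show ?thesis by (simp add: c_def)
  qed
  have mu: "expectation (Z 0) = expectation (T 0) + expectation (R 0)"
    using intT0 intR0 by (subst Bochner_Integration.integral_add[symmetric]) (auto simp: T_def R_def)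
  have markov: "prob {\<omega>\<in>space M. (\<Sum>i<n. \<bar>R i \<omega>\<bar>) / real n \<ge> e/4} \<le> eta/2" for n
  proof -
    have intS: "integrable M (\<lambda>\<omega>. (\<Sum>i<n. \<bar>R i \<omega>\<bar>) / real n)"
      using absR by auto
    have "prob {\<omega>\<in>space M. (\<Sum>i<n. \<bar>R i \<omega>\<bar>) / real n \<ge> e/4}
        \<le> expectation (\<lambda>\<omega>. (\<Sum>i<n. \<bar>R i \<omega>\<bar>) / real n) / (e/4)"
      by (rule integral_Markov_inequality_measure[OF intS, where A="space M"]) (use e in auto)
    also have "expectation (\<lambda>\<omega>. (\<Sum>i<n. \<bar>R i \<omega>\<bar>) / real n) \<le> expectation (\<lambda>x. \<bar>R 0 x\<bar>)"
    proof (cases "n = 0")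
      case True then show ?thesis by (simp add: integral_nonneg_AE)
    next
      case False
      have "expectation (\<lambda>\<omega>. (\<Sum>i<n. \<bar>R i \<omega>\<bar>) / real n) = (\<Sum>i<n. expectation (\<lambda>\<omega>. \<bar>R i \<omega>\<bar>)) / real n"
        using absR by (simp add: Bochner_Integration.integral_sum)
      also have "(\<Sum>i<n. expectation (\<lambda>\<omega>. \<bar>R i \<omega>\<bar>)) = (\<Sum>i<n. expectation (\<lambda>\<omega>. \<bar>R 0 \<omega>\<bar>))"
        by (rule sum.cong) (use absR in auto)
      also have "\<dots> / real n = expectation (\<lambda>x. \<bar>R 0 x\<bar>)" using False by simp
      finally show ?thesis by simp
    qed
    then have "expectation (\<lambda>\<omega>. (\<Sum>i<n. \<bar>R i \<omega>\<bar>) / real n) / (e/4) \<le> c / (e/4)"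
      using K(2) e by (intro divide_right_mono) (auto simp: R_def)
    also have "c / (e/4) \<le> (eta*e/8) / (e/4)"
      using e by (intro divide_right_mono) (auto simp: c_def)
    also have "(eta*e/8) / (e/4) = eta/2"
      using e by simp
    finally show ?thesis by simp
  qed
  have hoeff: "prob {\<omega>\<in>space M. \<bar>(\<Sum>i<n. T i \<omega>) / real n - expectation (T 0)\<bar> \<ge> e/2}
          \<le> 2 * exp (-2 * real n * (e/2)\<^sup>2 / (K - (-K))\<^sup>2)" if n: "n > 0" for n
  proof -
    interpret H: Hoeffding_ineq_iid M "{..<n}" T "T 0" "-K" K "expectation (T 0)"
    proof unfold_locales
      show "indep_vars (\<lambda>_. borel) T {..<n}"
        unfolding T_def
        by (rule indep_vars_compose2[where X=Z and N="\<lambda>_. borel"])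
           (rule indep_vars_subset[OF indep], auto)
      fix i assume "i \<in> {..<n}"
      have "distr M borel (T i) = distr (distr M borel (Z i)) borel (trunc K)"
        unfolding T_def by (subst distr_distr) (auto simp: comp_def)
      also have "\<dots> = distr (distr M borel (Z 0)) borel (trunc K)" by (simp only: ident[of i])
      also have "\<dots> = distr M borel (T 0)"
        unfolding T_def by (subst distr_distr) (auto simp: comp_def)
      finally show "distr M borel (T i) = distr M borel (T 0)" .
    qed (use K in \<open>auto simp: T_def trunc_def\<close>)
    have "prob {x\<in>space M. \<bar>(\<Sum>i\<in>{..<n}. T i x) / real (card {..<n}) - expectation (T 0)\<bar> \<ge> e/2}
        \<le> 2 * exp (-2 * real (card {..<n}) * (e/2)\<^sup>2 / (K - (-K))\<^sup>2)"
      by (rule H.Hoeffding_ineq_abs_ge') (use e K n in auto)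
    then show ?thesis by (simp only: card_lessThan)
  qed
  have "(\<lambda>n. 2 * exp (-2 * real n * (e/2)\<^sup>2 / (K - (-K))\<^sup>2)) \<longlonglongrightarrow> 2 * 0"
  proof (intro tendsto_mult tendsto_const)
    define q where "q = (e/2)\<^sup>2 / (K - (-K))\<^sup>2"
    have pos: "q > 0" using e K by (auto simp: q_def)
    have eq: "(\<lambda>n. exp (-2 * real n * (e/2)\<^sup>2 / (K - (-K))\<^sup>2)) = (\<lambda>n. (exp (-2 * q)) ^ n)"
      by (rule ext) (simp add: exp_of_nat_mult[symmetric] q_def mult_ac)
    have "(\<lambda>n. (exp (-2 * q)) ^ n) \<longlonglongrightarrow> 0"
      by (rule LIMSEQ_power_zero) (use pos in simp)
    then show "(\<lambda>n. exp (-2 * real n * (e/2)\<^sup>2 / (K - (-K))\<^sup>2)) \<longlonglongrightarrow> 0"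
      unfolding eq .
  qed
  then have "eventually (\<lambda>n. 2 * exp (-2 * real n * (e/2)\<^sup>2 / (K - (-K))\<^sup>2) < eta/2) sequentially"
    by (rule order_tendstoD(2)) (use eta in simp)
  then have "eventually (\<lambda>n. prob {\<omega>\<in>space M. \<bar>(\<Sum>i<n. Z i \<omega>) / real n - expectation (Z 0)\<bar> > e} < eta) sequentially"
    using eventually_ge_at_top[of 1]
  proof eventually_elim
    case (elim n)
    then have n: "n > 0" by auto
    let ?A = "{\<omega>\<in>space M. \<bar>(\<Sum>i<n. Z i \<omega>) / real n - expectation (Z 0)\<bar> > e}"
    let ?B = "{\<omega>\<in>space M. \<bar>(\<Sum>i<n. T i \<omega>) / real n - expectation (T 0)\<bar> \<ge> e/2}"
    let ?C = "{\<omega>\<in>space M. (\<Sum>i<n. \<bar>R i \<omega>\<bar>) / real n \<ge> e/4}"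
    have sub: "?A \<subseteq> ?B \<union> ?C"
    proof
      fix \<omega> assume A: "\<omega> \<in> ?A"
      have dec: "(\<Sum>i<n. Z i \<omega>) / real n - expectation (Z 0)
          = ((\<Sum>i<n. T i \<omega>) / real n - expectation (T 0)) + (\<Sum>i<n. R i \<omega>) / real n - expectation (R 0)"
      proof -
        have "(\<Sum>i<n. Z i \<omega>) = (\<Sum>i<n. T i \<omega>) + (\<Sum>i<n. R i \<omega>)"
          by (simp add: R_def T_def sum.distrib[symmetric])
        then show ?thesis by (simp add: mu add_divide_distrib)
      qed
      have h1: "\<bar>(\<Sum>i<n. R i \<omega>) / real n\<bar> \<le> (\<Sum>i<n. \<bar>R i \<omega>\<bar>) / real n"
        unfolding abs_divide using n by (simp add: divide_right_mono sum_abs)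
      have om: "\<omega> \<in> space M" and gt: "\<bar>(\<Sum>i<n. Z i \<omega>) / real n - expectation (Z 0)\<bar> > e"
        using A by auto
      show "\<omega> \<in> ?B \<union> ?C"
      proof (rule ccontr)
        assume "\<omega> \<notin> ?B \<union> ?C"
        then have b: "\<bar>(\<Sum>i<n. T i \<omega>) / real n - expectation (T 0)\<bar> < e/2"
          and cc: "(\<Sum>i<n. \<bar>R i \<omega>\<bar>) / real n < e/4"
          using om by auto
        show False using gt b cc h1 ER unfolding dec by linarith
      qed
    qed
    have "prob ?A \<le> prob (?B \<union> ?C)" by (intro finite_measure_mono sub) measurable
    also have "\<dots> \<le> prob ?B + prob ?C" by (rule measure_subadditive) (auto simp: emeasure_eq_measure)
    also have "\<dots> < eta/2 + eta/2"
      using hoeff[OF n] markov[of n] elim by linarith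
    finally show ?case by simp
  qed
  then obtain N where "\<forall>n\<ge>N. prob {\<omega>\<in>space M. \<bar>(\<Sum>i<n. Z i \<omega>) / real n - expectation (Z 0)\<bar> > e} < eta"
    by (auto simp: eventually_sequentially)
  then show "\<exists>no. \<forall>n\<ge>no. norm (prob {\<omega>\<in>space M. \<bar>(\<Sum>i<n. Z i \<omega>) / real n - expectation (Z 0)\<bar> > e} - 0) < eta"
    by auto
qed



lemma ratio_close:
  fixes a b e :: real
  assumes b: "b > 0" and e: "e > 0"
  shows "\<exists>d>0. \<forall>x y. \<bar>x - a\<bar> \<le> d \<longrightarrow> \<bar>y - b\<bar> \<le> d \<longrightarrow> \<bar>x / y - a / b\<bar> \<le> e"
proof -
  define d where "d = min (b/2) (e * b\<^sup>2 / (2 * (b + \<bar>a\<bar>)))"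
  have bpos: "b + \<bar>a\<bar> > 0" using b by linarith
  have d: "d > 0" using b e bpos by (auto simp: d_def)
  have "\<bar>x / y - a / b\<bar> \<le> e" if x: "\<bar>x - a\<bar> \<le> d" and y: "\<bar>y - b\<bar> \<le> d" for x y
  proof -
    have "d \<le> b/2" unfolding d_def by (rule min.cobounded1)
    then have "\<bar>y - b\<bar> \<le> b/2" using y by linarith
    then have y2: "y \<ge> b/2" by linarith
    then have ypos: "y > 0" using b by linarith
    have eq: "x / y - a / b = ((x - a) * b - a * (y - b)) / (y * b)"
      using ypos b by (simp add: field_simps)
    have num: "\<bar>(x - a) * b - a * (y - b)\<bar> \<le> d * (b + \<bar>a\<bar>)"
    proof -
      have "\<bar>(x - a) * b - a * (y - b)\<bar> \<le> \<bar>(x - a) * b\<bar> + \<bar>a * (y - b)\<bar>"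
        by (rule abs_triangle_ineq4)
      also have "\<dots> = \<bar>x - a\<bar> * b + \<bar>a\<bar> * \<bar>y - b\<bar>" using b by (simp add: abs_mult)
      also have "\<dots> \<le> d * b + \<bar>a\<bar> * d"
        using x y b by (intro add_mono mult_mono mult_left_mono) auto
      finally show ?thesis by (simp add: algebra_simps)
    qed
    have dle: "d * (b + \<bar>a\<bar>) \<le> e * b\<^sup>2 / 2"
    proof -
      have "d \<le> e * b\<^sup>2 / (2 * (b + \<bar>a\<bar>))" unfolding d_def by (rule min.cobounded2)
      then have "d * (b + \<bar>a\<bar>) \<le> e * b\<^sup>2 / (2 * (b + \<bar>a\<bar>)) * (b + \<bar>a\<bar>)"
        using bpos by (intro mult_right_mono) auto
      also have "\<dots> = e * b\<^sup>2 / 2" using bpos by (simp add: field_simps)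
      finally show ?thesis .
    qed
    have "(b/2) * b \<le> y * b" using y2 b by (intro mult_right_mono) auto
    then have den: "y * b \<ge> b\<^sup>2 / 2" by (simp add: power2_eq_square)
    have "\<bar>x / y - a / b\<bar> = \<bar>(x - a) * b - a * (y - b)\<bar> / (y * b)"
      using eq ypos b by (simp add: abs_divide)
    also have "\<dots> \<le> (e * b\<^sup>2 / 2) / (b\<^sup>2 / 2)"
      using num dle den b by (intro frac_le) auto
    also have "\<dots> = e" using b by simp
    finally show ?thesis .
  qed
  then show ?thesis using d by blast
qed

lemma (in prob_space) conv_ratio:
  fixes A B :: "nat \<Rightarrow> 'a \<Rightarrow> real"
  assumes [measurable]: "\<And>n. A n \<in> borel_measurable M" "\<And>n. B n \<in> borel_measurable M"
    and cA: "\<And>e. e > 0 \<Longrightarrow> (\<lambda>n. prob {\<omega>\<in>space M. \<bar>A n \<omega> - a\<bar> > e}) \<longlonglongrightarrow> 0"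
    and cB: "\<And>e. e > 0 \<Longrightarrow> (\<lambda>n. prob {\<omega>\<in>space M. \<bar>B n \<omega> - b\<bar> > e}) \<longlonglongrightarrow> 0"
    and b: "b > 0" and e: "e > 0"
  shows "(\<lambda>n. prob {\<omega>\<in>space M. \<bar>A n \<omega> / B n \<omega> - a / b\<bar> > e}) \<longlonglongrightarrow> 0"
proof -
  obtain d where d: "d > 0" and dd: "\<And>x y. \<bar>x - a\<bar> \<le> d \<Longrightarrow> \<bar>y - b\<bar> \<le> d \<Longrightarrow> \<bar>x / y - a / b\<bar> \<le> e"
    using ratio_close[OF b e, of a] by blast
  have le: "prob {\<omega>\<in>space M. \<bar>A n \<omega> / B n \<omega> - a / b\<bar> > e}
      \<le> prob {\<omega>\<in>space M. \<bar>A n \<omega> - a\<bar> > d} + prob {\<omega>\<in>space M. \<bar>B n \<omega> - b\<bar> > d}" for n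
  proof -
    have "prob {\<omega>\<in>space M. \<bar>A n \<omega> / B n \<omega> - a / b\<bar> > e}
       \<le> prob ({\<omega>\<in>space M. \<bar>A n \<omega> - a\<bar> > d} \<union> {\<omega>\<in>space M. \<bar>B n \<omega> - b\<bar> > d})"
    proof (rule finite_measure_mono)
      show "{\<omega>\<in>space M. \<bar>A n \<omega> / B n \<omega> - a / b\<bar> > e}
         \<subseteq> {\<omega>\<in>space M. \<bar>A n \<omega> - a\<bar> > d} \<union> {\<omega>\<in>space M. \<bar>B n \<omega> - b\<bar> > d}"
      proof
        fix \<omega> assume "\<omega> \<in> {\<omega>\<in>space M. \<bar>A n \<omega> / B n \<omega> - a / b\<bar> > e}"
        then have om: "\<omega> \<in> space M" and gt: "\<bar>A n \<omega> / B n \<omega> - a / b\<bar> > e" by auto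
        show "\<omega> \<in> {\<omega>\<in>space M. \<bar>A n \<omega> - a\<bar> > d} \<union> {\<omega>\<in>space M. \<bar>B n \<omega> - b\<bar> > d}"
        proof (rule ccontr)
          assume "\<omega> \<notin> {\<omega>\<in>space M. \<bar>A n \<omega> - a\<bar> > d} \<union> {\<omega>\<in>space M. \<bar>B n \<omega> - b\<bar> > d}"
          then have "\<bar>A n \<omega> - a\<bar> \<le> d" "\<bar>B n \<omega> - b\<bar> \<le> d" using om by auto
          from dd[OF this] gt show False by linarith
        qed
      qed
    qed measurable
    also have "\<dots> \<le> prob {\<omega>\<in>space M. \<bar>A n \<omega> - a\<bar> > d} + prob {\<omega>\<in>space M. \<bar>B n \<omega> - b\<bar> > d}"
      by (rule measure_subadditive) (auto simp: emeasure_eq_measure)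
    finally show ?thesis .
  qed
  have "(\<lambda>n. prob {\<omega>\<in>space M. \<bar>A n \<omega> - a\<bar> > d} + prob {\<omega>\<in>space M. \<bar>B n \<omega> - b\<bar> > d}) \<longlonglongrightarrow> 0 + 0"
    by (rule tendsto_add[OF cA[OF d] cB[OF d]])
  then have lim: "(\<lambda>n. prob {\<omega>\<in>space M. \<bar>A n \<omega> - a\<bar> > d} + prob {\<omega>\<in>space M. \<bar>B n \<omega> - b\<bar> > d}) \<longlonglongrightarrow> 0"
    by simp
  show ?thesis
  proof (rule tendsto_sandwich[where f="\<lambda>_. 0"])
    show "eventually (\<lambda>n. 0 \<le> prob {\<omega>\<in>space M. \<bar>A n \<omega> / B n \<omega> - a / b\<bar> > e}) sequentially"
      by simp
    show "eventually (\<lambda>n. prob {\<omega>\<in>space M. \<bar>A n \<omega> / B n \<omega> - a / b\<bar> > e}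
        \<le> prob {\<omega>\<in>space M. \<bar>A n \<omega> - a\<bar> > d} + prob {\<omega>\<in>space M. \<bar>B n \<omega> - b\<bar> > d}) sequentially"
      using le by simp
  qed (auto intro: lim)
qed


lemma lin_grad:
  fixes L :: "'a::euclidean_space \<Rightarrow> real"
  assumes "linear L"
  shows "(\<Sum>b\<in>Basis. L b *\<^sub>R b) \<bullet> w = L w"
proof -
  have "L w = L (\<Sum>b\<in>Basis. (w \<bullet> b) *\<^sub>R b)" by (simp add: euclidean_representation)
  also have "\<dots> = (\<Sum>b\<in>Basis. (w \<bullet> b) * L b)"
    using assms by (simp add: linear_sum linear_scale)
  also have "\<dots> = (\<Sum>b\<in>Basis. L b * (b \<bullet> w))"
    by (rule sum.cong) (simp_all add: inner_commute)
  also have "\<dots> = (\<Sum>b\<in>Basis. L b *\<^sub>R b) \<bullet> w"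
    by (simp add: inner_sum_left)
  finally show ?thesis by simp
qed

lemma chain_path:
  fixes f :: "'a::euclidean_space \<Rightarrow> real \<Rightarrow> real" and \<gamma> :: "real \<Rightarrow> 'a"
  assumes diff: "(\<lambda>(y, r). f y r) differentiable (at (\<gamma> s, s) within UNIV \<times> {0..1})"
    and s: "s \<in> {0..1}"
    and g: "(\<gamma> has_vector_derivative w) (at s within {0..1})"
  shows "((\<lambda>r. f (\<gamma> r) r) has_real_derivative (grad (\<lambda>y. f y s) (\<gamma> s) \<bullet> w + partial_t f (\<gamma> s) s))
           (at s within {0..1})"
proof -
  let ?F = "\<lambda>(y, r). f y r"
  obtain D where D: "(?F has_derivative D) (at (\<gamma> s, s) within UNIV \<times> {0..1})"
    using diff unfolding differentiable_def by blast
  have lin: "linear D" using has_derivative_linear[OF D] .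
  have p: "((\<lambda>r. (\<gamma> r, r)) has_derivative (\<lambda>h. (h *\<^sub>R w, h))) (at s within {0..1})"
    using g unfolding has_vector_derivative_def
    by (intro has_derivative_Pair has_derivative_ident)
  have D1: "(?F has_derivative D) (at (\<gamma> s, s) within (\<lambda>r. (\<gamma> r, r)) ` {0..1})"
    by (rule has_derivative_subset[OF D]) auto
  have c1: "((?F \<circ> (\<lambda>r. (\<gamma> r, r))) has_derivative (D \<circ> (\<lambda>h. (h *\<^sub>R w, h)))) (at s within {0..1})"
    by (rule diff_chain_within[OF p]) (use D1 in simp)
  have e1: "(D \<circ> (\<lambda>h. (h *\<^sub>R w, h))) = (\<lambda>h. D (w, 1) * h)"
  proof
    fix h :: real
    have "(h *\<^sub>R w, h) = h *\<^sub>R (w, 1)" by simp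
    then have "D (h *\<^sub>R w, h) = D (h *\<^sub>R (w, 1))" by (simp only:)
    also have "\<dots> = h *\<^sub>R D (w, 1)" using lin by (rule linear_scale)
    finally show "(D \<circ> (\<lambda>h. (h *\<^sub>R w, h))) h = D (w, 1) * h" by simp
  qed
  have dpath: "((\<lambda>r. f (\<gamma> r) r) has_real_derivative D (w, 1)) (at s within {0..1})"
    using c1 unfolding e1 has_field_derivative_def by (simp add: comp_def)
  have pt: "((\<lambda>r. (\<gamma> s, r)) has_derivative (\<lambda>h. (0, h))) (at s within {0..1})"
    by (intro has_derivative_Pair has_derivative_ident has_derivative_const)
  have D2: "(?F has_derivative D) (at (\<gamma> s, s) within (\<lambda>r. (\<gamma> s, r)) ` {0..1})"
    by (rule has_derivative_subset[OF D]) auto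
  have c2: "((?F \<circ> (\<lambda>r. (\<gamma> s, r))) has_derivative (D \<circ> (\<lambda>h. (0, h)))) (at s within {0..1})"
    by (rule diff_chain_within[OF pt]) (use D2 in simp)
  have e2: "(D \<circ> (\<lambda>h. (0, h))) = (\<lambda>h. h *\<^sub>R D (0, 1))"
  proof
    fix h :: real
    have "(0::'a, h) = h *\<^sub>R (0, 1)" by simp
    then have "D (0, h) = D (h *\<^sub>R (0, 1))" by (simp only:)
    also have "\<dots> = h *\<^sub>R D (0, 1)" using lin by (rule linear_scale)
    finally show "(D \<circ> (\<lambda>h. (0, h))) h = h *\<^sub>R D (0, 1)" by simp
  qed
  have "((\<lambda>r. f (\<gamma> s) r) has_vector_derivative D (0, 1)) (at s within {0..1})"
    using c2 unfolding e2 has_vector_derivative_def by (simp add: comp_def)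
  then have ptv: "partial_t f (\<gamma> s) s = D (0, 1)"
    unfolding partial_t_def using s by (intro vector_derivative_within_closed_interval) auto
  have px: "((\<lambda>y. (y, s)) has_derivative (\<lambda>h. (h, 0))) (at (\<gamma> s))"
    by (intro has_derivative_Pair has_derivative_ident has_derivative_const)
  have D3: "(?F has_derivative D) (at (\<gamma> s, s) within (\<lambda>y. (y, s)) ` UNIV)"
    by (rule has_derivative_subset[OF D]) (use s in auto)
  have c3: "((?F \<circ> (\<lambda>y. (y, s))) has_derivative (D \<circ> (\<lambda>h. (h, 0)))) (at (\<gamma> s) within UNIV)"
    by (rule diff_chain_within[OF px]) (use D3 in simp)
  then have c3': "((\<lambda>y. f y s) has_derivative (\<lambda>h. D (h, 0))) (at (\<gamma> s))"
    by (simp add: comp_def)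
  have fd: "frechet_derivative (\<lambda>y. f y s) (at (\<gamma> s)) = (\<lambda>h. D (h, 0))"
    using frechet_derivative_at[OF c3'] by simp
  have lin3: "linear (\<lambda>h. D (h, 0))" using has_derivative_linear[OF c3'] .
  have gv: "grad (\<lambda>y. f y s) (\<gamma> s) \<bullet> w = D (w, 0)"
    unfolding grad_def fd using lin_grad[OF lin3] .
  have "D (w, 1) = D (w, 0) + D (0, 1)"
  proof -
    have "(w, 1::real) = (w, 0) + (0, 1)" by simp
    then show ?thesis using lin by (metis linear_add)
  qed
  then show ?thesis using dpath gv ptv by simp
qed



lemma deriv_lip:
  fixes f :: "'a::real_normed_vector \<Rightarrow> 'b::real_normed_vector"
  assumes d: "(f has_derivative f') (at x)" and lip: "\<And>y z. dist (f y) (f z) \<le> L * dist y z"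
  shows "norm (f' h) \<le> L * norm h"
proof (cases "h = 0")
  case True
  have "f' 0 = 0" using has_derivative_linear[OF d] by (rule linear_0)
  then show ?thesis using True by simp
next
  case False
  then have hpos: "norm h > 0" by simp
  have lin: "linear f'" using has_derivative_linear[OF d] .
  show ?thesis
  proof (rule field_le_epsilon)
    fix e :: real assume e: "e > 0"
    have "e / norm h > 0" using e hpos by simp
    then obtain dd where dd: "dd > 0"
      and ddp: "\<And>y. norm (y - x) < dd \<Longrightarrow> norm (f y - f x - f' (y - x)) \<le> (e / norm h) * norm (y - x)"
      using d unfolding has_derivative_at_alt by blast
    define t where "t = dd / (2 * norm h)"
    have t: "t > 0" using dd hpos by (simp add: t_def)
    have nt: "norm (t *\<^sub>R h) = t * norm h" using t by simp
    have "t * norm h = dd / 2" using hpos by (simp add: t_def)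
    then have "norm ((x + t *\<^sub>R h) - x) < dd" using dd nt by simp
    from ddp[OF this] have 10: "norm (f (x + t *\<^sub>R h) - f x - f' ((x + t *\<^sub>R h) - x)) \<le> (e / norm h) * norm ((x + t *\<^sub>R h) - x)" .
    have yx: "(x + t *\<^sub>R h) - x = t *\<^sub>R h" by simp
    have 1: "norm (f (x + t *\<^sub>R h) - f x - f' (t *\<^sub>R h)) \<le> (e / norm h) * (t * norm h)"
      using 10 unfolding yx nt .
    have 2: "norm (f (x + t *\<^sub>R h) - f x) \<le> L * (t * norm h)"
      using lip[of "x + t *\<^sub>R h" x] nt t by (simp add: dist_norm)
    have "norm (f' (t *\<^sub>R h)) \<le> norm (f (x + t *\<^sub>R h) - f x) + norm (f (x + t *\<^sub>R h) - f x - f' (t *\<^sub>R h))"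
      by (metis norm_triangle_ineq4 diff_diff_eq2 diff_self diff_zero add.commute norm_minus_commute
          norm_triangle_sub)
    also have "\<dots> \<le> L * (t * norm h) + (e / norm h) * (t * norm h)"
      using 1 2 by linarith
    also have "\<dots> = t * (L * norm h + e)" using hpos by (simp add: field_simps)
    finally have "t * norm (f' h) \<le> t * (L * norm h + e)"
      using lin t by (simp add: linear_scale)
    then show "norm (f' h) \<le> L * norm h + e" using t by simp
  qed
qed

lemma nondec_from_deriv:
  fixes u u' :: "real \<Rightarrow> real"
  assumes ab: "a \<le> b"
    and d: "\<And>s. s \<in> {a..b} \<Longrightarrow> (u has_real_derivative u' s) (at s within {a..b})"
    and nn: "\<And>s. s \<in> {a..b} \<Longrightarrow> u' s \<ge> 0"
  shows "u a \<le> u b"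
proof -
  have "(u' has_integral (u b - u a)) {a..b}"
    using ab d by (intro fundamental_theorem_of_calculus) (auto simp: has_real_derivative_iff_has_vector_derivative)
  then have "0 \<le> u b - u a" using nn by (rule has_integral_nonneg)
  then show ?thesis by simp
qed

lemma div_product:
  fixes r :: "'a::euclidean_space \<Rightarrow> real" and V :: "'a \<Rightarrow> 'a"
  assumes dr: "r differentiable (at x)" and dV: "V differentiable (at x)"
  shows "divergence (\<lambda>y. r y *\<^sub>R V y) x = r x * divergence V x + grad r x \<bullet> V x"
proof -
  let ?r' = "frechet_derivative r (at x)" and ?V' = "frechet_derivative V (at x)"
  have r': "(r has_derivative ?r') (at x)" using dr by (rule frechet_derivative_works[THEN iffD1])
  have V': "(V has_derivative ?V') (at x)" using dV by (rule frechet_derivative_works[THEN iffD1])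
  have P: "((\<lambda>y. r y *\<^sub>R V y) has_derivative (\<lambda>h. r x *\<^sub>R ?V' h + ?r' h *\<^sub>R V x)) (at x)"
    using has_derivative_scaleR[OF r' V'] .
  have fd: "frechet_derivative (\<lambda>y. r y *\<^sub>R V y) (at x) = (\<lambda>h. r x *\<^sub>R ?V' h + ?r' h *\<^sub>R V x)"
    using frechet_derivative_at[OF P] by simp
  have "divergence (\<lambda>y. r y *\<^sub>R V y) x = (\<Sum>b\<in>Basis. r x * (?V' b \<bullet> b) + ?r' b * (V x \<bullet> b))"
    unfolding divergence_def fd by (simp add: inner_add_left)
  also have "\<dots> = r x * (\<Sum>b\<in>Basis. ?V' b \<bullet> b) + (\<Sum>b\<in>Basis. ?r' b * (V x \<bullet> b))"
    by (simp add: sum.distrib sum_distrib_left)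
  also have "(\<Sum>b\<in>Basis. ?r' b * (V x \<bullet> b)) = (\<Sum>b\<in>Basis. ?r' b * (b \<bullet> V x))"
    by (rule sum.cong) (simp_all add: inner_commute)
  also have "\<dots> = grad r x \<bullet> V x"
    unfolding grad_def by (simp add: inner_sum_left)
  finally show ?thesis unfolding divergence_def .
qed

lemma div_bound:
  fixes V :: "'a::euclidean_space \<Rightarrow> 'a"
  assumes dV: "V differentiable (at x)" and lip: "\<And>y z. dist (V y) (V z) \<le> L * dist y z"
  shows "\<bar>divergence V x\<bar> \<le> real DIM('a) * L"
proof -
  let ?V' = "frechet_derivative V (at x)"
  have V': "(V has_derivative ?V') (at x)" using dV by (rule frechet_derivative_works[THEN iffD1])
  have "\<bar>divergence V x\<bar> \<le> (\<Sum>b\<in>(Basis::'a set). \<bar>?V' b \<bullet> b\<bar>)"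
    unfolding divergence_def by (rule sum_abs)
  also have "\<dots> \<le> (\<Sum>b\<in>(Basis::'a set). L)"
  proof (rule sum_mono)
    fix b :: 'a assume b: "b \<in> Basis"
    have "\<bar>?V' b \<bullet> b\<bar> \<le> norm (?V' b) * norm b" by (rule Cauchy_Schwarz_ineq2)
    also have "\<dots> = norm (?V' b)" using b by simp
    also have "\<dots> \<le> L * norm b" by (rule deriv_lip[OF V' lip])
    also have "\<dots> = L" using b by simp
    finally show "\<bar>?V' b \<bullet> b\<bar> \<le> L" .
  qed
  also have "\<dots> = real DIM('a) * L" by simp
  finally show ?thesis .
qed



lemma space_diff:
  fixes f :: "'a::euclidean_space \<Rightarrow> real \<Rightarrow> 'b::real_normed_vector"
  assumes diff: "(\<lambda>(y, r). f y r) differentiable (at (x, s) within UNIV \<times> {0..1})"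
    and s: "s \<in> {0..1}"
  shows "(\<lambda>y. f y s) differentiable (at x)"
proof -
  let ?F = "\<lambda>(y, r). f y r"
  obtain D where D: "(?F has_derivative D) (at (x, s) within UNIV \<times> {0..1})"
    using diff unfolding differentiable_def by blast
  have px: "((\<lambda>y. (y, s)) has_derivative (\<lambda>h. (h, 0))) (at x)"
    by (intro has_derivative_Pair has_derivative_ident has_derivative_const)
  have D3: "(?F has_derivative D) (at (x, s) within (\<lambda>y. (y, s)) ` UNIV)"
    by (rule has_derivative_subset[OF D]) (use s in auto)
  have c3: "((?F \<circ> (\<lambda>y. (y, s))) has_derivative (D \<circ> (\<lambda>h. (h, 0)))) (at x within UNIV)"
    by (rule diff_chain_within[OF px]) (use D3 in simp)
  then show ?thesis unfolding differentiable_def by (auto simp: comp_def)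
qed

lemma smooth_on_diff:
  assumes "smooth_on S f" "x \<in> S"
  shows "f differentiable (at x within S)"
  using assms unfolding smooth_on_def by (metis empty_subsetI empty_set iter_partial.simps(1))

lemma density_path:
  fixes rt :: "'a::euclidean_space \<Rightarrow> real \<Rightarrow> real" and v :: "'a \<Rightarrow> real \<Rightarrow> 'a"
    and \<gamma> :: "real \<Rightarrow> 'a"
  assumes rt_diff: "\<And>x s. s \<in> {0..1} \<Longrightarrow> (\<lambda>(y, r). rt y r) differentiable (at (x, s) within UNIV \<times> {0..1})"
    and pde: "\<And>x s. s \<in> {0..1} \<Longrightarrow> partial_t rt x s = - divergence (\<lambda>y. rt y s *\<^sub>R v y s) x"
    and v_diff: "\<And>x s. s \<in> {0..1} \<Longrightarrow> (\<lambda>y. v y s) differentiable (at x)"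
    and ode: "\<And>s. s \<in> {0..1} \<Longrightarrow> (\<gamma> has_vector_derivative v (\<gamma> s) s) (at s within {0..1})"
    and s: "s \<in> {0..1}"
  shows "((\<lambda>r. rt (\<gamma> r) r) has_real_derivative (- rt (\<gamma> s) s * divergence (\<lambda>y. v y s) (\<gamma> s))) (at s within {0..1})"
proof -
  have c: "((\<lambda>r. rt (\<gamma> r) r) has_real_derivative (grad (\<lambda>y. rt y s) (\<gamma> s) \<bullet> v (\<gamma> s) s + partial_t rt (\<gamma> s) s))
           (at s within {0..1})"
    by (rule chain_path[OF rt_diff[OF s] s ode[OF s]])
  have "divergence (\<lambda>y. rt y s *\<^sub>R v y s) (\<gamma> s)
      = rt (\<gamma> s) s * divergence (\<lambda>y. v y s) (\<gamma> s) + grad (\<lambda>y. rt y s) (\<gamma> s) \<bullet> v (\<gamma> s) s"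
    by (rule div_product[OF space_diff[OF rt_diff[OF s] s] v_diff[OF s]])
  then have "grad (\<lambda>y. rt y s) (\<gamma> s) \<bullet> v (\<gamma> s) s + partial_t rt (\<gamma> s) s = - rt (\<gamma> s) s * divergence (\<lambda>y. v y s) (\<gamma> s)"
    using pde[OF s, of "\<gamma> s"] by simp
  then show ?thesis using c by simp
qed

lemma positive_path:
  fixes p a :: "real \<Rightarrow> real"
  assumes d: "\<And>s. s \<in> {0..1} \<Longrightarrow> (p has_real_derivative (- p s * a s)) (at s within {0..1})"
    and bnd: "\<And>s. s \<in> {0..1} \<Longrightarrow> \<bar>a s\<bar> \<le> K"
    and p0: "p 0 > 0"
    and s: "s \<in> {0..1}"
  shows "p s > 0"
proof -
  have ne: "p r \<noteq> 0" if r: "r \<in> {0..1}" for r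
  proof -
    let ?u = "\<lambda>r. p r * p r * exp (2 * K * r)"
    have "?u 0 \<le> ?u r"
    proof (rule nondec_from_deriv[where u = "?u" and a = 0 and b = r and u' = "\<lambda>r. 2 * (p r * p r) * exp (2 * K * r) * (K - a r)"])
      show "0 \<le> r" using r by simp
      fix q assume q: "q \<in> {0..r}"
      then have q1: "q \<in> {0..1}" using r by auto
      have dq: "(p has_real_derivative (- p q * a q)) (at q within {0..r})"
        using DERIV_subset[OF d[OF q1]] r by auto
      have e: "((\<lambda>r. exp (2 * K * r)) has_real_derivative exp (2 * K * q) * (2 * K)) (at q within {0..r})"
      proof -
        have g: "((\<lambda>r. 2 * K * r) has_real_derivative 2 * K) (at q within {0..r})"
          using DERIV_cmult[OF DERIV_ident, of "2 * K" q "{0..r}"] by simp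
        show ?thesis by (rule DERIV_chain2[OF DERIV_exp g])
      qed
      show "(?u has_real_derivative 2 * (p q * p q) * exp (2 * K * q) * (K - a q)) (at q within {0..r})"
        by (rule DERIV_cong[OF DERIV_mult[OF DERIV_mult[OF dq dq] e]]) (simp add: algebra_simps)
      have "K - a q \<ge> 0" using bnd[OF q1] by linarith
      then show "0 \<le> 2 * (p q * p q) * exp (2 * K * q) * (K - a q)" by simp
    qed
    then have "p 0 * p 0 \<le> p r * p r * exp (2 * K * r)" by simp
    moreover have "p 0 * p 0 > 0" using p0 by simp
    ultimately show ?thesis by auto
  qed
  have cont: "continuous_on {0..s} p"
  proof -
    have "continuous_on {0..1} p"
      unfolding continuous_on_eq_continuous_within
      using d by (blast intro: DERIV_continuous)
    then show ?thesis by (rule continuous_on_subset) (use s in auto)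
  qed
  show ?thesis
  proof (rule ccontr)
    assume "\<not> p s > 0"
    then have "p s \<le> 0" by simp
    then obtain r where "0 \<le> r" "r \<le> s" "p r = 0"
      using IVT2'[of p s 0 0, OF _ _ _ cont] p0 s by auto
    then show False using ne[of r] s by auto
  qed
qed



lemma ln_diff:
  fixes rho :: "'a::euclidean_space \<Rightarrow> real \<Rightarrow> real"
  assumes d: "(\<lambda>(y, r). rho y r) differentiable (at (x, s) within UNIV \<times> {0..1})"
    and pos: "rho x s > 0"
  shows "(\<lambda>(y, r). ln (rho y r)) differentiable (at (x, s) within UNIV \<times> {0..1})"
proof -
  let ?R = "\<lambda>(y, r). rho y r"
  obtain D where D: "(?R has_derivative D) (at (x, s) within UNIV \<times> {0..1})"
    using d unfolding differentiable_def by blast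
  have "((\<lambda>z. ln (?R z)) has_derivative (\<lambda>h. D h * inverse (?R (x, s)))) (at (x, s) within UNIV \<times> {0..1})"
    by (rule DERIV_compose_FDERIV[OF DERIV_ln D]) (use pos in simp)
  moreover have "(\<lambda>z. ln (?R z)) = (\<lambda>(y, r). ln (rho y r))" by (auto simp: fun_eq_iff)
  ultimately show ?thesis unfolding differentiable_def by auto
qed

lemma weight_formula:
  fixes rho :: "'a::euclidean_space \<Rightarrow> real \<Rightarrow> real"
    and v :: "'a \<Rightarrow> real \<Rightarrow> 'a" and X :: "'a \<Rightarrow> real \<Rightarrow> 'a" and rho_theta :: "'a \<Rightarrow> real \<Rightarrow> real"
  assumes rho_pos: "\<And>x s. s \<in> {0..1} \<Longrightarrow> rho x s > 0"
    and rho_smooth: "smooth_on (UNIV \<times> {0..1}) (\<lambda>(x, s). rho x s)"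
    and v_smooth: "smooth_on (UNIV \<times> {0..1}) (\<lambda>(x, s). v x s)"
    and v_lipschitz: "\<exists>L. \<forall>s\<in>{0..1}. \<forall>x y. dist (v x s) (v y s) \<le> L * dist x y"
    and flow_init: "\<And>x0. X x0 0 = x0"
    and flow_ode: "\<And>x0 s. s \<in> {0..1} \<Longrightarrow>
                     ((X x0) has_vector_derivative v (X x0 s) s) (at s within {0..1})"
    and rho_theta_diff: "\<And>x s. s \<in> {0..1} \<Longrightarrow>
                     (\<lambda>(y, r). rho_theta y r) differentiable (at (x, s) within UNIV \<times> {0..1})"
    and rho_theta_pde: "\<And>x s. s \<in> {0..1} \<Longrightarrow>
                     partial_t rho_theta x s = - divergence (\<lambda>y. rho_theta y s *\<^sub>R v y s) x"
    and rho_theta_init: "\<And>x. rho_theta x 0 = rho x 0"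
    and t_range: "t \<in> {0..1}"
    and w_welldef: "\<And>x0. (\<lambda>s. epsf rho v (X x0 s) s) integrable_on {0..t}"
  shows "\<exists>C>0. \<forall>x0. rho_theta (X x0 t) t > 0 \<and>
           wtilde rho v X t x0 = C * (rho (X x0 t) t / rho_theta (X x0 t) t)"
proof -
  define m where "m s = (\<integral>y. partial_t (\<lambda>y s. ln (rho y s)) y s \<partial>star_measure rho s)" for s
  define C where "C = exp (- integral {0..t} m)"
  obtain L where L: "\<And>s x y. s \<in> {0..1} \<Longrightarrow> dist (v x s) (v y s) \<le> L * dist x y"
    using v_lipschitz by blast
  have v_diff: "(\<lambda>y. v y s) differentiable (at x)" if s: "s \<in> {0..1}" for x s
    by (rule space_diff[OF _ s]) (rule smooth_on_diff[OF v_smooth], use s in auto)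
  have rho_diff: "(\<lambda>(y, r). rho y r) differentiable (at (x, s) within UNIV \<times> {0..1})" if s: "s \<in> {0..1}" for x s
    by (rule smooth_on_diff[OF rho_smooth]) (use s in auto)
  have main: "rho_theta (X x0 t) t > 0 \<and> wtilde rho v X t x0 = C * (rho (X x0 t) t / rho_theta (X x0 t) t)" for x0
  proof -
    define \<gamma> where "\<gamma> = X x0"
    define p where "p s = rho_theta (\<gamma> s) s" for s
    define a where "a s = divergence (\<lambda>y. v y s) (\<gamma> s)" for s
    have ode: "\<And>s. s \<in> {0..1} \<Longrightarrow> (\<gamma> has_vector_derivative v (\<gamma> s) s) (at s within {0..1})"
      unfolding \<gamma>_def by (rule flow_ode)
    have dp: "(p has_real_derivative (- p s * a s)) (at s within {0..1})" if s: "s \<in> {0..1}" for s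
      unfolding p_def a_def
      by (rule density_path[OF rho_theta_diff rho_theta_pde v_diff ode s])
    have abnd: "\<bar>a s\<bar> \<le> real DIM('a) * L" if s: "s \<in> {0..1}" for s
      unfolding a_def by (rule div_bound[OF v_diff[OF s]]) (rule L[OF s])
    have p0: "p 0 > 0" unfolding p_def \<gamma>_def using flow_init rho_theta_init rho_pos[of 0] by simp
    have ppos: "p s > 0" if s: "s \<in> {0..1}" for s
      by (rule positive_path[OF dp abnd p0 s])
    define Lf where "Lf s = ln (rho (\<gamma> s) s) - ln (p s)" for s
    have dL: "(Lf has_real_derivative (epsf rho v (\<gamma> s) s + m s)) (at s within {0..1})" if s: "s \<in> {0..1}" for s
    proof -
      have d1: "((\<lambda>r. ln (rho (\<gamma> r) r)) has_real_derivative
                 (grad (\<lambda>y. ln (rho y s)) (\<gamma> s) \<bullet> v (\<gamma> s) s + partial_t (\<lambda>y s. ln (rho y s)) (\<gamma> s) s))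
               (at s within {0..1})"
        by (rule chain_path[where f = "\<lambda>y r. ln (rho y r)", OF ln_diff[OF rho_diff[OF s] rho_pos[OF s]] s ode[OF s]])
      have d2: "((\<lambda>r. ln (p r)) has_real_derivative (1 / p s * (- p s * a s))) (at s within {0..1})"
        by (rule DERIV_chain2[OF DERIV_ln_divide[OF ppos[OF s]] dp[OF s]])
      have "(Lf has_real_derivative
              (grad (\<lambda>y. ln (rho y s)) (\<gamma> s) \<bullet> v (\<gamma> s) s + partial_t (\<lambda>y s. ln (rho y s)) (\<gamma> s) s)
              - (1 / p s * (- p s * a s))) (at s within {0..1})"
        unfolding Lf_def by (rule DERIV_diff[OF d1 d2])
      moreover have "(grad (\<lambda>y. ln (rho y s)) (\<gamma> s) \<bullet> v (\<gamma> s) s + partial_t (\<lambda>y s. ln (rho y s)) (\<gamma> s) s)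
              - (1 / p s * (- p s * a s)) = epsf rho v (\<gamma> s) s + m s"
        using ppos[OF s] by (simp add: epsf_def gfun_def score_def a_def m_def)
      ultimately show ?thesis by simp
    qed
    have t0: "0 \<le> t" "t \<le> 1" using t_range by auto
    have ftc: "((\<lambda>s. epsf rho v (\<gamma> s) s + m s) has_integral (Lf t - Lf 0)) {0..t}"
    proof (rule fundamental_theorem_of_calculus[OF t0(1)])
      fix s assume s: "s \<in> {0..t}"
      then have s1: "s \<in> {0..1}" using t0 by auto
      have "(Lf has_real_derivative (epsf rho v (\<gamma> s) s + m s)) (at s within {0..t})"
        by (rule DERIV_subset[OF dL[OF s1]]) (use t0 in auto)
      then show "(Lf has_vector_derivative (epsf rho v (\<gamma> s) s + m s)) (at s within {0..t})"
        by (simp add: has_real_derivative_iff_has_vector_derivative)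
    qed
    have ie: "((\<lambda>s. epsf rho v (\<gamma> s) s) has_integral integral {0..t} (\<lambda>s. epsf rho v (\<gamma> s) s)) {0..t}"
      using w_welldef[of x0] unfolding \<gamma>_def by (simp add: has_integral_integral)
    have "((\<lambda>s. (epsf rho v (\<gamma> s) s + m s) - epsf rho v (\<gamma> s) s) has_integral
            (Lf t - Lf 0) - integral {0..t} (\<lambda>s. epsf rho v (\<gamma> s) s)) {0..t}"
      by (rule has_integral_diff[OF ftc ie])
    then have im: "(m has_integral (Lf t - Lf 0) - integral {0..t} (\<lambda>s. epsf rho v (\<gamma> s) s)) {0..t}"
      by simp
    have L0: "Lf 0 = 0" unfolding Lf_def p_def \<gamma>_def using flow_init rho_theta_init by simp
    have Ieps: "integral {0..t} (\<lambda>s. epsf rho v (\<gamma> s) s) = Lf t - integral {0..t} m"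
      using integral_unique[OF im] L0 by simp
    have pt: "p t > 0" using ppos t0 by auto
    have rt: "rho (\<gamma> t) t > 0" using rho_pos t0 by auto
    have "wtilde rho v X t x0 = exp (Lf t - integral {0..t} m)"
      unfolding wtilde_def using Ieps by (simp add: \<gamma>_def)
    also have "\<dots> = exp (Lf t) * C" by (simp add: C_def exp_diff exp_minus field_simps)
    also have "exp (Lf t) = rho (\<gamma> t) t / p t"
      unfolding Lf_def using pt rt by (simp add: exp_diff)
    finally show ?thesis using pt unfolding p_def \<gamma>_def by simp
  qed
  have "C > 0" by (simp add: C_def)
  then show ?thesis using main by blast
qed



lemma flow_lip:
  fixes v :: "'a::euclidean_space \<Rightarrow> real \<Rightarrow> 'a" and X :: "'a \<Rightarrow> real \<Rightarrow> 'a"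
  assumes L: "\<And>s x y. s \<in> {0..1} \<Longrightarrow> dist (v x s) (v y s) \<le> L * dist x y"
    and ode: "\<And>x0 s. s \<in> {0..1} \<Longrightarrow> ((X x0) has_vector_derivative v (X x0 s) s) (at s within {0..1})"
    and init: "\<And>x0. X x0 0 = x0"
    and t: "t \<in> {0..1}"
  shows "dist (X x0 t) (X y0 t) \<le> exp (L * t) * dist x0 y0"
proof -
  define D where "D s = X x0 s - X y0 s" for s
  define D' where "D' s = v (X x0 s) s - v (X y0 s) s" for s
  define u where "u s = - ((D s \<bullet> D s) * exp (- 2 * L * s))" for s
  have t0: "0 \<le> t" "t \<le> 1" using t by auto
  have "u 0 \<le> u t"
  proof (rule nondec_from_deriv[where u = u and a = 0 and b = t
        and u' = "\<lambda>s. - ((2 * (D s \<bullet> D' s)) * exp (- 2 * L * s) + exp (- 2 * L * s) * (- 2 * L) * (D s \<bullet> D s))"])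
    show "0 \<le> t" by (rule t0)
    fix s assume s: "s \<in> {0..t}"
    then have s1: "s \<in> {0..1}" using t0 by auto
    have dD: "(D has_vector_derivative D' s) (at s within {0..t})"
      unfolding D_def D'_def
      by (rule has_vector_derivative_diff; rule has_vector_derivative_within_subset[OF ode[OF s1]]) (use t0 in auto)
    then have dD': "(D has_derivative (\<lambda>h. h *\<^sub>R D' s)) (at s within {0..t})"
      by (simp add: has_vector_derivative_def)
    have "((\<lambda>r. D r \<bullet> D r) has_derivative (\<lambda>h. D s \<bullet> (h *\<^sub>R D' s) + (h *\<^sub>R D' s) \<bullet> D s)) (at s within {0..t})"
      by (rule has_derivative_inner[OF dD' dD'])
    moreover have "(\<lambda>h. D s \<bullet> (h *\<^sub>R D' s) + (h *\<^sub>R D' s) \<bullet> D s) = (\<lambda>h. (2 * (D s \<bullet> D' s)) * h)"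
      by (auto simp: fun_eq_iff inner_commute algebra_simps)
    ultimately have dn: "((\<lambda>r. D r \<bullet> D r) has_real_derivative 2 * (D s \<bullet> D' s)) (at s within {0..t})"
      by (simp add: has_field_derivative_def)
    have g: "((\<lambda>r. - 2 * L * r) has_real_derivative - 2 * L) (at s within {0..t})"
      using DERIV_cmult[OF DERIV_ident, of "- 2 * L" s "{0..t}"] by simp
    have e: "((\<lambda>r. exp (- 2 * L * r)) has_real_derivative exp (- 2 * L * s) * (- 2 * L)) (at s within {0..t})"
      by (rule DERIV_chain2[OF DERIV_exp g])
    show "(u has_real_derivative - ((2 * (D s \<bullet> D' s)) * exp (- 2 * L * s) + exp (- 2 * L * s) * (- 2 * L) * (D s \<bullet> D s))) (at s within {0..t})"
      unfolding u_def by (rule DERIV_minus[OF DERIV_mult[OF dn e]])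
    have "D s \<bullet> D' s \<le> norm (D s) * norm (D' s)" by (rule norm_cauchy_schwarz)
    also have "norm (D' s) \<le> L * norm (D s)"
      using L[OF s1, of "X x0 s" "X y0 s"] by (simp add: D_def D'_def dist_norm)
    then have "norm (D s) * norm (D' s) \<le> norm (D s) * (L * norm (D s))"
      by (intro mult_left_mono) auto
    finally have "D s \<bullet> D' s \<le> L * (D s \<bullet> D s)" by (simp add: dot_square_norm power2_eq_square mult_ac)
    then have "2 * (D s \<bullet> D' s) + (- 2 * L) * (D s \<bullet> D s) \<le> 0" by linarith
    then have "exp (- 2 * L * s) * (2 * (D s \<bullet> D' s) + (- 2 * L) * (D s \<bullet> D s)) \<le> 0"
      by (simp add: mult_le_0_iff)
    then show "0 \<le> - ((2 * (D s \<bullet> D' s)) * exp (- 2 * L * s) + exp (- 2 * L * s) * (- 2 * L) * (D s \<bullet> D s))"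
      by (simp add: algebra_simps)
  qed
  then have "(D t \<bullet> D t) * exp (- 2 * L * t) \<le> D 0 \<bullet> D 0" by (simp add: u_def)
  then have "(D t \<bullet> D t) \<le> (D 0 \<bullet> D 0) * exp (2 * L * t)"
    by (simp add: exp_minus field_simps)
  then have "(norm (D t))\<^sup>2 \<le> (exp (L * t) * norm (D 0))\<^sup>2"
    by (simp add: power2_norm_eq_inner power_mult_distrib exp_double[symmetric] mult_ac)
  then have "norm (D t) \<le> exp (L * t) * norm (D 0)"
    by (rule power2_le_imp_le) simp
  then show ?thesis by (simp add: D_def init dist_norm)
qed

lemma flow_cont:
  fixes v :: "'a::euclidean_space \<Rightarrow> real \<Rightarrow> 'a" and X :: "'a \<Rightarrow> real \<Rightarrow> 'a"
  assumes L: "\<And>s x y. s \<in> {0..1} \<Longrightarrow> dist (v x s) (v y s) \<le> L * dist x y"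
    and ode: "\<And>x0 s. s \<in> {0..1} \<Longrightarrow> ((X x0) has_vector_derivative v (X x0 s) s) (at s within {0..1})"
    and init: "\<And>x0. X x0 0 = x0"
    and t: "t \<in> {0..1}"
  shows "continuous_on UNIV (\<lambda>x0. X x0 t)"
proof -
  have "exp (L * t) \<ge> 0" by simp
  have "(exp (L * t))-lipschitz_on UNIV (\<lambda>x0. X x0 t)"
    by (rule lipschitz_onI) (use flow_lip[OF L ode init t] in auto)
  then show ?thesis by (rule lipschitz_on_continuous_on)
qed



lemma Zc_pos:
  fixes rho :: "'a::euclidean_space \<Rightarrow> real \<Rightarrow> real"
  assumes pos: "\<And>y. rho y t > 0" and int: "integrable lborel (\<lambda>x. rho x t)"
  shows "Zc rho t > 0"
proof -
  have nn: "AE x in lborel. 0 \<le> rho x t" using pos by (simp add: less_imp_le)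
  have ge: "Zc rho t \<ge> 0" unfolding Zc_def using nn by (rule integral_nonneg_AE)
  have "Zc rho t \<noteq> 0"
  proof
    assume "Zc rho t = 0"
    then have "AE x in lborel. rho x t = 0"
      using integral_nonneg_eq_0_iff_AE[OF int nn] unfolding Zc_def by simp
    moreover have "AE x in lborel. rho x t = 0 \<longrightarrow> False"
      using pos by (intro AE_I2) (metis less_irrefl)
    ultimately have "AE x::'a in lborel. False" by (rule AE_mp)
    then obtain N where N0: "\<And>x::'a. x \<in> space lborel - N \<Longrightarrow> False" and N: "N \<in> null_sets lborel"
      by (rule AE_E3) blast
    have "(UNIV :: 'a set) \<subseteq> N" using N0 by auto
    then have "emeasure lborel (UNIV :: 'a set) \<le> emeasure lborel N"
      by (intro emeasure_mono) (use N in auto)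
    then show False using N by (auto simp: null_setsD1)
  qed
  then show ?thesis using ge by simp
qed

lemma main_conv:
  fixes rho rt :: "'a::euclidean_space \<Rightarrow> real \<Rightarrow> real" and v :: "'a \<Rightarrow> real \<Rightarrow> 'a"
    and X :: "'a \<Rightarrow> real \<Rightarrow> 'a" and M :: "'w measure" and xs :: "nat \<Rightarrow> 'w \<Rightarrow> 'a"
    and G :: "'a \<Rightarrow> real"
  assumes C: "C > 0"
    and wC: "\<And>x0. wtilde rho v X t x0 = C * (rho (X x0 t) t / rt (X x0 t) t)"
    and rtpos: "\<And>y. rt y t > 0"
    and rhopos: "\<And>y. rho y t > 0"
    and Xm[measurable]: "(\<lambda>x0. X x0 t) \<in> borel_measurable borel"
    and rhom[measurable]: "(\<lambda>y. rho y t) \<in> borel_measurable borel"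
    and rtm[measurable]: "(\<lambda>y. rt y t) \<in> borel_measurable borel"
    and Zint: "integrable lborel (\<lambda>x. rho x t)"
    and push: "distr (density lborel (\<lambda>x. ennreal (rho x 0))) lborel (\<lambda>x0. X x0 t) = density lborel (\<lambda>x. ennreal (rt x t))"
    and G_int: "integrable (star_measure rho t) G"
    and M_prob: "prob_space M"
    and xs_indep: "prob_space.indep_vars M (\<lambda>_. borel) xs UNIV"
    and xs_distr: "\<And>i. distributed M lborel (xs i) (\<lambda>x. ennreal (rho x 0))"
  shows "conv_in_prob M (\<lambda>N \<omega>. estimator rho v X t G (\<lambda>i. xs i \<omega>) N) (\<integral>x. G x \<partial>star_measure rho t)"
proof -
  interpret prob_space M by (rule M_prob)
  have Zc: "Zc rho t > 0" by (rule Zc_pos[where rho=rho and t=t, OF rhopos Zint])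
  have Gm[measurable]: "G \<in> borel_measurable borel"
  proof -
    have "G \<in> borel_measurable (star_measure rho t)" using G_int by auto
    then show ?thesis unfolding star_measure_def by simp
  qed
  have xsm[measurable]: "xs i \<in> borel_measurable M" for i
    using xs_distr[of i] unfolding distributed_def by simp
  define b where "b y = rho y t / rt y t" for y
  have bm[measurable]: "b \<in> borel_measurable borel" unfolding b_def by measurable
  have distrY: "distr M lborel (\<lambda>\<omega>. X (xs i \<omega>) t) = density lborel (\<lambda>x. ennreal (rt x t))" for i
  proof -
    have "distr M lborel (\<lambda>\<omega>. X (xs i \<omega>) t) = distr (distr M lborel (xs i)) lborel (\<lambda>x0. X x0 t)"
      by (subst distr_distr) (auto simp: comp_def)
    also have "distr M lborel (xs i) = density lborel (\<lambda>x. ennreal (rho x 0))"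
      using xs_distr[of i] unfolding distributed_def by simp
    finally show ?thesis using push by simp
  qed
  have transfer: "integrable M (\<lambda>\<omega>. h (X (xs i \<omega>) t)) \<longleftrightarrow> integrable lborel (\<lambda>y. rt y t * h y)"
    "expectation (\<lambda>\<omega>. h (X (xs i \<omega>) t)) = (\<integral>y. rt y t * h y \<partial>lborel)"
    "distr M borel (\<lambda>\<omega>. h (X (xs i \<omega>) t)) = distr (density lborel (\<lambda>x. ennreal (rt x t))) borel h"
    if hm[measurable]: "h \<in> borel_measurable borel" for h :: "'a \<Rightarrow> real" and i
  proof -
    have nn: "AE y in lborel. 0 \<le> rt y t" using rtpos by (simp add: less_imp_le)
    have "integrable M (\<lambda>\<omega>. h (X (xs i \<omega>) t)) \<longleftrightarrow> integrable (distr M lborel (\<lambda>\<omega>. X (xs i \<omega>) t)) h"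
      by (subst integrable_distr_eq) auto
    also have "\<dots> \<longleftrightarrow> integrable lborel (\<lambda>y. rt y t * h y)"
      unfolding distrY by (subst integrable_density) (use nn in auto)
    finally show "integrable M (\<lambda>\<omega>. h (X (xs i \<omega>) t)) \<longleftrightarrow> integrable lborel (\<lambda>y. rt y t * h y)" .
    have "expectation (\<lambda>\<omega>. h (X (xs i \<omega>) t)) = (\<integral>y. h y \<partial>distr M lborel (\<lambda>\<omega>. X (xs i \<omega>) t))"
      by (subst integral_distr) auto
    also have "\<dots> = (\<integral>y. rt y t * h y \<partial>lborel)"
      unfolding distrY by (subst integral_density) (use nn in auto)
    finally show "expectation (\<lambda>\<omega>. h (X (xs i \<omega>) t)) = (\<integral>y. rt y t * h y \<partial>lborel)" .
    have "distr M borel (\<lambda>\<omega>. h (X (xs i \<omega>) t)) = distr (distr M lborel (\<lambda>\<omega>. X (xs i \<omega>) t)) borel h"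
      by (subst distr_distr) (auto simp: comp_def)
    then show "distr M borel (\<lambda>\<omega>. h (X (xs i \<omega>) t)) = distr (density lborel (\<lambda>x. ennreal (rt x t))) borel h"
      unfolding distrY .
  qed
  have indep_h: "indep_vars (\<lambda>_. borel) (\<lambda>i \<omega>. h (X (xs i \<omega>) t)) UNIV"
    if hm[measurable]: "h \<in> borel_measurable borel" for h :: "'a \<Rightarrow> real"
    by (rule indep_vars_compose2[where X = xs and Y = "\<lambda>i x. h (X x t)" and M' = "\<lambda>_. borel", OF xs_indep])
       measurable
  have rGint: "integrable lborel (\<lambda>y. rho y t * G y)"
  proof -
    have "integrable lborel (\<lambda>y. rho_star rho y t *\<^sub>R G y)"
      using G_int unfolding star_measure_def
      by (subst (asm) integrable_density) (auto simp: rho_star_def Zc less_imp_le rhopos)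
    then have "integrable lborel (\<lambda>y. Zc rho t * (rho_star rho y t * G y))" by simp
    then show ?thesis using Zc by (simp add: rho_star_def)
  qed
  have starint: "(\<integral>x. G x \<partial>star_measure rho t) = (\<integral>y. rho y t * G y \<partial>lborel) / Zc rho t"
  proof -
    have "(\<integral>x. G x \<partial>star_measure rho t) = (\<integral>y. rho_star rho y t *\<^sub>R G y \<partial>lborel)"
      unfolding star_measure_def
      by (subst integral_density) (auto simp: rho_star_def Zc less_imp_le rhopos)
    also have "\<dots> = (\<integral>y. rho y t * G y / Zc rho t \<partial>lborel)" by (simp add: rho_star_def)
    also have "\<dots> = (\<integral>y. rho y t * G y \<partial>lborel) / Zc rho t" by simp
    finally show ?thesis .
  qed
  define Z where "Z i \<omega> = b (X (xs i \<omega>) t) * G (X (xs i \<omega>) t)" for i \<omega>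
  define B where "B i \<omega> = b (X (xs i \<omega>) t)" for i \<omega>
  have Zm[measurable]: "Z i \<in> borel_measurable M" for i unfolding Z_def by measurable
  have Bm[measurable]: "B i \<in> borel_measurable M" for i unfolding B_def by measurable
  have rtb: "rt y t * b y = rho y t" for y using rtpos[of y] by (simp add: b_def)
  have Zint0: "integrable M (Z 0)"
    unfolding Z_def using transfer(1)[of "\<lambda>y. b y * G y" 0] rGint by (simp add: rtb mult.assoc[symmetric])
  have EZ: "expectation (Z 0) = (\<integral>y. rho y t * G y \<partial>lborel)"
    unfolding Z_def using transfer(2)[of "\<lambda>y. b y * G y" 0] by (simp add: rtb mult.assoc[symmetric])
  have Bint0: "integrable M (B 0)"
    unfolding B_def using transfer(1)[of b 0] Zint by (simp add: rtb)
  have EB: "expectation (B 0) = Zc rho t"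
    unfolding B_def using transfer(2)[of b 0] by (simp add: rtb Zc_def)
  have Zident: "distr M borel (Z i) = distr M borel (Z 0)" for i
    unfolding Z_def using transfer(3)[of "\<lambda>y. b y * G y" i] transfer(3)[of "\<lambda>y. b y * G y" 0] by simp
  have Bident: "distr M borel (B i) = distr M borel (B 0)" for i
    unfolding B_def using transfer(3)[of b i] transfer(3)[of b 0] by simp
  have Zindep: "indep_vars (\<lambda>_. borel) Z UNIV"
    unfolding Z_def[abs_def] using indep_h[of "\<lambda>y. b y * G y"] by simp
  have Bindep: "indep_vars (\<lambda>_. borel) B UNIV"
    unfolding B_def[abs_def] using indep_h[of b] by simp
  define An where "An n \<omega> = (\<Sum>i<n. Z i \<omega>) / real n" for n \<omega>
  define Bn where "Bn n \<omega> = (\<Sum>i<n. B i \<omega>) / real n" for n \<omega>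
  have [measurable]: "An n \<in> borel_measurable M" "Bn n \<in> borel_measurable M" for n
    unfolding An_def Bn_def by measurable
  have cA: "(\<lambda>n. prob {\<omega>\<in>space M. \<bar>An n \<omega> - expectation (Z 0)\<bar> > e}) \<longlonglongrightarrow> 0" if "e > 0" for e
    unfolding An_def by (rule wlln[OF Zindep Zident Zint0 that])
  have cB: "(\<lambda>n. prob {\<omega>\<in>space M. \<bar>Bn n \<omega> - expectation (B 0)\<bar> > e}) \<longlonglongrightarrow> 0" if "e > 0" for e
    unfolding Bn_def by (rule wlln[OF Bindep Bident Bint0 that])
  have EBpos: "expectation (B 0) > 0" using EB Zc by simp
  have lim: "expectation (Z 0) / expectation (B 0) = (\<integral>x. G x \<partial>star_measure rho t)"
    using EZ EB starint by simp
  have est: "estimator rho v X t G (\<lambda>i. xs i \<omega>) N = An N \<omega> / Bn N \<omega>" for N \<omega>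
  proof -
    have "estimator rho v X t G (\<lambda>i. xs i \<omega>) N
        = (\<Sum>i<N. (C * B i \<omega> / (\<Sum>j<N. C * B j \<omega>)) * G (X (xs i \<omega>) t))"
      unfolding estimator_def wC B_def b_def by simp
    also have "\<dots> = (\<Sum>i<N. (B i \<omega> / (\<Sum>j<N. B j \<omega>)) * G (X (xs i \<omega>) t))"
      using C by (simp add: sum_distrib_left[symmetric])
    also have "\<dots> = (\<Sum>i<N. Z i \<omega>) / (\<Sum>j<N. B j \<omega>)"
      by (simp add: sum_divide_distrib Z_def B_def)
    also have "\<dots> = An N \<omega> / Bn N \<omega>"
      by (cases "N = 0") (simp_all add: An_def Bn_def)
    finally show ?thesis .
  qed
  show ?thesis
    unfolding conv_in_prob_def est
  proof (intro conjI allI impI)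
    fix n show "(\<lambda>\<omega>. An n \<omega> / Bn n \<omega>) \<in> borel_measurable M" by measurable
  next
    fix e :: real assume e: "e > 0"
    have "(\<lambda>n. prob {\<omega>\<in>space M. \<bar>An n \<omega> / Bn n \<omega> - expectation (Z 0) / expectation (B 0)\<bar> > e}) \<longlonglongrightarrow> 0"
      by (rule conv_ratio[OF _ _ cA cB EBpos e]) measurable
    then show "(\<lambda>n. measure M {\<omega>\<in>space M. \<bar>An n \<omega> / Bn n \<omega> - (\<integral>x. G x \<partial>star_measure rho t)\<bar> > e}) \<longlonglongrightarrow> 0"
      unfolding lim .
  qed
qed


theorem proposition2:
  fixes rho :: "'a::euclidean_space \<Rightarrow> real \<Rightarrow> real"   \<comment> \<open>unnormalised density rho_tilde_*\<close>
    and v :: "'a \<Rightarrow> real \<Rightarrow> 'a"                           \<comment> \<open>velocity field v_theta\<close>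
    and X :: "'a \<Rightarrow> real \<Rightarrow> 'a"                           \<comment> \<open>flow: X x0 t = x(t;x0)\<close>
    and rho_theta :: "'a \<Rightarrow> real \<Rightarrow> real"                 \<comment> \<open>pushed-forward density rho_theta\<close>
    and M :: "'w measure" and xs :: "nat \<Rightarrow> 'w \<Rightarrow> 'a"      \<comment> \<open>i.i.d. samples x0^(i)\<close>
    and F :: "'a \<Rightarrow> real" and t :: real
  assumes rho_pos: "\<And>x s. s \<in> {0..1} \<Longrightarrow> rho x s > 0"
    and rho_smooth: "smooth_on (UNIV \<times> {0..1}) (\<lambda>(x, s). rho x s)"
    and rho_Z: "\<And>s. s \<in> {0..1} \<Longrightarrow> integrable lborel (\<lambda>x. rho x s)"
    and mu_normalised: "(\<integral>x. rho x 0 \<partial>lborel) = 1"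
    and v_smooth: "smooth_on (UNIV \<times> {0..1}) (\<lambda>(x, s). v x s)"
    and v_lipschitz: "\<exists>L. \<forall>s\<in>{0..1}. \<forall>x y. dist (v x s) (v y s) \<le> L * dist x y"
    and flow_init: "\<And>x0. X x0 0 = x0"
    and flow_ode: "\<And>x0 s. s \<in> {0..1} \<Longrightarrow>
                     ((X x0) has_vector_derivative v (X x0 s) s) (at s within {0..1})"
    and rho_theta_diff: "\<And>x s. s \<in> {0..1} \<Longrightarrow>
                     (\<lambda>(y, r). rho_theta y r) differentiable (at (x, s) within UNIV \<times> {0..1})"
    and rho_theta_pde: "\<And>x s. s \<in> {0..1} \<Longrightarrow>
                     partial_t rho_theta x s = - divergence (\<lambda>y. rho_theta y s *\<^sub>R v y s) x"
    and rho_theta_init: "\<And>x. rho_theta x 0 = rho x 0"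
    and rho_theta_pushforward: "\<And>s. s \<in> {0..1} \<Longrightarrow>
                     distr (density lborel (\<lambda>x. ennreal (rho x 0))) lborel (\<lambda>x0. X x0 s)
                       = density lborel (\<lambda>x. ennreal (rho_theta x s))"
    and t_range: "t \<in> {0..1}"
    and dominates: "\<And>x. rho_star rho x t > 0 \<Longrightarrow> rho_theta x t > 0"
    and w_welldef: "\<And>x0. (\<lambda>s. epsf rho v (X x0 s) s) integrable_on {0..t}"
    and F_int: "integrable (star_measure rho t) F"
    and M_prob: "prob_space M"
    and xs_indep: "prob_space.indep_vars M (\<lambda>_. borel) xs UNIV"
    and xs_distr: "\<And>i. distributed M lborel (xs i) (\<lambda>x. ennreal (rho x 0))"
  shows "conv_in_prob M (\<lambda>N \<omega>. estimator rho v X t F (\<lambda>i. xs i \<omega>) N)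
           (\<integral>x. F x \<partial>star_measure rho t)
       \<and> (integrable (star_measure rho t) (\<lambda>x. partial_t (\<lambda>y s. ln (rho y s)) x t) \<longrightarrow>
           conv_in_prob M
             (\<lambda>N \<omega>. estimator rho v X t (\<lambda>x. partial_t (\<lambda>y s. ln (rho y s)) x t) (\<lambda>i. xs i \<omega>) N)
             (\<integral>x. partial_t (\<lambda>y s. ln (rho y s)) x t \<partial>star_measure rho t))"
proof -
  obtain C where C: "C > 0" and wf: "\<forall>x0. rho_theta (X x0 t) t > 0 \<and>
           wtilde rho v X t x0 = C * (rho (X x0 t) t / rho_theta (X x0 t) t)"
    using weight_formula[OF rho_pos rho_smooth v_smooth v_lipschitz flow_init flow_ode rho_theta_diff
        rho_theta_pde rho_theta_init t_range w_welldef] by blast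
  obtain L where L: "\<And>s x y. s \<in> {0..1} \<Longrightarrow> dist (v x s) (v y s) \<le> L * dist x y"
    using v_lipschitz by blast
  have Xm: "(\<lambda>x0. X x0 t) \<in> borel_measurable borel"
    by (rule borel_measurable_continuous_onI[OF flow_cont[OF L flow_ode flow_init t_range]])
  have rhod: "(\<lambda>y. rho y t) differentiable (at x)" for x
    by (rule space_diff[OF _ t_range]) (rule smooth_on_diff[OF rho_smooth], use t_range in auto)
  have rtd: "(\<lambda>y. rho_theta y t) differentiable (at x)" for x
    by (rule space_diff[OF rho_theta_diff[OF t_range] t_range])
  have rhom: "(\<lambda>y. rho y t) \<in> borel_measurable borel"
    by (rule borel_measurable_continuous_onI)
       (simp add: continuous_on_eq_continuous_at differentiable_imp_continuous_within rhod)
  have rtm: "(\<lambda>y. rho_theta y t) \<in> borel_measurable borel"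
    by (rule borel_measurable_continuous_onI)
       (simp add: continuous_on_eq_continuous_at differentiable_imp_continuous_within rtd)
  have rhopos: "\<And>y. rho y t > 0" using rho_pos t_range by blast
  have Zint: "integrable lborel (\<lambda>x. rho x t)" using rho_Z t_range by blast
  have Zc: "Zc rho t > 0" by (rule Zc_pos[where rho=rho and t=t, OF rhopos Zint])
  have rtpos: "\<And>y. rho_theta y t > 0"
    using dominates rhopos Zc by (simp add: rho_star_def)
  have wC: "\<And>x0. wtilde rho v X t x0 = C * (rho (X x0 t) t / rho_theta (X x0 t) t)"
    using wf by blast
  have main: "conv_in_prob M (\<lambda>N \<omega>. estimator rho v X t G (\<lambda>i. xs i \<omega>) N) (\<integral>x. G x \<partial>star_measure rho t)"
    if G: "integrable (star_measure rho t) G" for G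
    by (rule main_conv[where rho=rho and rt=rho_theta and v=v and X=X and t=t and M=M and xs=xs and G=G, OF C wC rtpos rhopos Xm rhom rtm Zint rho_theta_pushforward[OF t_range] G
          M_prob xs_indep xs_distr])
  show ?thesis using main F_int by blast
qed

end
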